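(* Let $(\beta_k)_{k\ge1}$ be non-negative reals with $\sum_{k\ge1}k\beta_k<\infty$, let $\beta(t)=\sum_{k\ge1}\beta_k t^k$, let $t^*=\inf\{t\ge0:\beta'(t)+\log(1-t)<0\}$ (so $t^*\in[0,1)$), and let $\gamma(t)=(1-t)\beta''(t)$. Then $\gamma(t^* )\le 1$. *)

theory Defs
  imports "HOL-Analysis.Analysis"
begin

definition beta_gf :: "(nat \<Rightarrow> real) \<Rightarrow> real \<Rightarrow> real" where
  "beta_gf b t = (\<Sum>k. (if k = 0 then 0 else b k) * t ^ k)"

text \<open>t* = inf { t >= 0 : beta'(t) + log(1-t) < 0 }, restricted to t < 1 where log(1-t) is defined.\<close>
definition tstar :: "(nat \<Rightarrow> real) \<Rightarrow> real" where
  "tstar b = Inf {t. 0 \<le> t \<and> t < 1 \<and> deriv (beta_gf b) t + ln (1 - t) < 0}"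

end

theory Submission
  imports Defs
begin

theorem lemma7:
  fixes b :: "nat \<Rightarrow> real"
  assumes nonneg: "\<And>k. k \<ge> 1 \<Longrightarrow> b k \<ge> 0"
    and summ: "summable (\<lambda>k. real k * b k)"
  shows "(1 - tstar b) * deriv (deriv (beta_gf b)) (tstar b) \<le> 1"
proof -
  define c where "c = (\<lambda>k. if k = 0 then 0 else b k)"
  have bg: "beta_gf b = (\<lambda>x. \<Sum>n. c n * x ^ n)"
    by (simp add: beta_gf_def c_def fun_eq_iff)
  have cnn: "c n \<ge> 0" for n using nonneg by (simp add: c_def)
  have smc: "summable (\<lambda>n. c n * x ^ n)" if "norm x < 1" for x :: real
  proof (rule summable_comparison_test[OF _ summ])
    show "\<exists>N. \<forall>n\<ge>N. norm (c n * x ^ n) \<le> real n * b n"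
    proof (intro exI allI impI)
      fix n :: nat assume "n \<ge> 1"
      have "norm (c n * x ^ n) = c n * \<bar>x\<bar> ^ n" using cnn[of n] by (simp add: abs_mult power_abs)
      also have "\<dots> \<le> c n * 1" using that cnn[of n]
        by (intro mult_left_mono) (auto intro: power_le_one)
      also have "\<dots> \<le> real n * b n" using \<open>n \<ge> 1\<close> nonneg[of n] c_def
        by (simp add: mult_le_cancel_right1)
      finally show "norm (c n * x ^ n) \<le> real n * b n" .
    qed
  qed
  define D1 where "D1 = (\<lambda>x::real. \<Sum>n. diffs c n * x ^ n)"
  define D2 where "D2 = (\<lambda>x::real. \<Sum>n. diffs (diffs c) n * x ^ n)"
  have smd: "summable (\<lambda>n. diffs c n * x ^ n)" if "norm x < 1" for x :: real
    by (rule termdiff_converges[OF that smc])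
  have dbeta: "(beta_gf b has_field_derivative D1 x) (at x)" if "\<bar>x\<bar> < 1" for x :: real
  proof -
    have "norm x < norm ((1 + \<bar>x\<bar>)/2)" using that by auto
    moreover have "summable (\<lambda>n. c n * ((1 + \<bar>x\<bar>)/2) ^ n)" using that by (intro smc) auto
    ultimately show ?thesis unfolding bg D1_def by (intro termdiffs_strong) auto
  qed
  have derb: "deriv (beta_gf b) x = D1 x" if "\<bar>x\<bar> < 1" for x :: real
    using dbeta[OF that] by (rule DERIV_imp_deriv)
  have dD1: "(D1 has_field_derivative D2 x) (at x)" if "\<bar>x\<bar> < 1" for x :: real
  proof -
    have "norm x < norm ((1 + \<bar>x\<bar>)/2)" using that by auto
    moreover have "summable (\<lambda>n. diffs c n * ((1 + \<bar>x\<bar>)/2) ^ n)" using that by (intro smd) auto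
    ultimately show ?thesis unfolding D2_def D1_def by (intro termdiffs_strong) auto
  qed
  have dd: "(deriv (beta_gf b) has_field_derivative D2 x) (at x)" if "\<bar>x\<bar> < 1" for x :: real
    by (rule has_field_derivative_transform_within_open[OF dD1[OF that], of "ball 0 1"])
       (use that derb in \<open>auto simp: dist_norm\<close>)
  have dd2: "deriv (deriv (beta_gf b)) x = D2 x" if "\<bar>x\<bar> < 1" for x :: real
    using dd[OF that] by (rule DERIV_imp_deriv)
  define f where "f = (\<lambda>t. deriv (beta_gf b) t + ln (1 - t))"
  define S where "S = {t. 0 \<le> t \<and> t < 1 \<and> deriv (beta_gf b) t + ln (1 - t) < 0}"
  have T: "tstar b = Inf S" by (simp add: tstar_def S_def)
  define M where "M = (\<Sum>n. diffs c n)"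
  have smd1: "summable (diffs c)"
  proof -
    have "summable (\<lambda>n. real (Suc n) * b (Suc n))"
      using summ summable_Suc_iff[where f = "\<lambda>k. real k * b k"] by simp
    then show ?thesis by (simp add: diffs_def c_def)
  qed
  have dcnn: "diffs c n \<ge> 0" for n using cnn[of "Suc n"] by (simp add: diffs_def)
  have D1le: "D1 t \<le> M" if "0 \<le> t" "t < 1" for t
    unfolding D1_def M_def
  proof (rule suminf_le)
    show "summable (\<lambda>n. diffs c n * t ^ n)" using smd[of t] that by simp
    show "summable (diffs c)" by (rule smd1)
    fix n show "diffs c n * t ^ n \<le> diffs c n"
      using dcnn[of n] that by (simp add: mult_left_le power_le_one)
  qed
  define t0 where "t0 = 1 - exp (-(M+1))"
  have "M \<ge> 0" unfolding M_def using smd1 dcnn by (intro suminf_nonneg) auto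
  hence t0: "0 \<le> t0" "t0 < 1" unfolding t0_def by auto
  have "ln (1 - t0) = -(M+1)" unfolding t0_def by simp
  hence "t0 \<in> S" using t0 D1le[OF t0] derb[of t0] unfolding S_def by auto
  hence Sne: "S \<noteq> {}" by auto
  have bdd: "bdd_below S" unfolding S_def by (rule bdd_belowI[of _ 0]) auto
  have T0: "0 \<le> tstar b" unfolding T using Sne by (intro cInf_greatest) (auto simp: S_def)
  have T1: "tstar b < 1" unfolding T using cInf_lower[OF \<open>t0 \<in> S\<close> bdd] t0 by linarith
  let ?T = "tstar b"
  have absT: "\<bar>?T\<bar> < 1" using T0 T1 by auto
  have df: "(f has_field_derivative (D2 ?T - 1 / (1 - ?T))) (at ?T)"
    unfolding f_def using T1
    by (auto intro!: derivative_eq_intros dd[OF absT] simp: field_simps)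
  have key: "D2 ?T - 1 / (1 - ?T) \<le> 0"
  proof (rule ccontr)
    assume "\<not> ?thesis"
    hence pos: "0 < D2 ?T - 1 / (1 - ?T)" by simp
    obtain d where d: "d > 0" "\<And>h. h > 0 \<Longrightarrow> h < d \<Longrightarrow> f ?T < f (?T + h)"
      using DERIV_pos_inc_right[OF df pos] by blast
    obtain d' where d': "d' > 0" "\<And>h. h > 0 \<Longrightarrow> h < d' \<Longrightarrow> f (?T - h) < f ?T"
      using DERIV_pos_inc_left[OF df pos] by blast
    have "Inf S < ?T + d" using d(1) T by simp
    then obtain t where t: "t \<in> S" "t < ?T + d" using cInf_lessD[OF Sne] by blast
    have "?T \<le> t" unfolding T using cInf_lower[OF t(1) bdd] .
    have ft: "f t < 0" using t(1) unfolding S_def f_def by auto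
    have fT: "f ?T < 0"
    proof (cases "t = ?T")
      case True then show ?thesis using ft by simp
    next
      case False
      hence "f ?T < f (?T + (t - ?T))" using d(2)[of "t - ?T"] \<open>?T \<le> t\<close> t(2) by auto
      then show ?thesis using ft by simp
    qed
    show False
    proof (cases "?T = 0")
      case True
      have "f 0 = D1 0" unfolding f_def using derb[of 0] by simp
      also have "D1 0 = diffs c 0" unfolding D1_def by simp
      finally have "f 0 \<ge> 0" using dcnn[of 0] by simp
      then show False using fT True by simp
    next
      case False
      hence Tp: "?T > 0" using T0 by simp
      define h where "h = min (d'/2) ?T"
      have h: "h > 0" "h < d'" "h \<le> ?T" unfolding h_def using Tp d'(1) by auto
      have "f (?T - h) < 0" using d'(2)[OF h(1) h(2)] fT by simp
      hence "?T - h \<in> S" using h T1 unfolding S_def f_def by auto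
      hence "?T \<le> ?T - h" unfolding T using cInf_lower[OF _ bdd] by (simp add: T)
      then show False using h by simp
    qed
  qed
  have "deriv (deriv (beta_gf b)) ?T = D2 ?T" by (rule dd2[OF absT])
  moreover have "(1 - ?T) * D2 ?T \<le> (1 - ?T) * (1 / (1 - ?T))"
    using key T1 by (intro mult_left_mono) auto
  ultimately show ?thesis using T1 by simp
qed

end
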